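(* Let $G$ be a finite simple graph of order $n$ without isolated vertices such that its maximum degree is $\Delta(G)=n-1$. Then $\gamma_t(G)=2$ and $TDV(v)\le n-1$ for every $v\in V(G)$; moreover $TDV(v)=n-1$ if and only if $\deg(v)=n-1$.
   Context: A set $D \subseteq V(G)$ is a total dominating set of $G$ if every vertex of $G$ has a neighbor in $D$. $\gamma_t(G)$ is the minimum cardinality of a total dominating set; a minimum one is a $\gamma_t(G)$-set. $TDV(v)$ is the number of $\gamma_t(G)$-sets containing $v$. *)

theory Defs
  imports Main
begin

definition simple_graph :: "'a set \<Rightarrow> ('a \<Rightarrow> 'a \<Rightarrow> bool) \<Rightarrow> bool" where
  "simple_graph V E \<longleftrightarrow> finite V \<and> (\<forall>x y. E x y \<longrightarrow> x \<in> V \<and> y \<in> V)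
     \<and> (\<forall>x y. E x y \<longrightarrow> E y x) \<and> (\<forall>x. \<not> E x x)"

definition nbhd :: "'a set \<Rightarrow> ('a \<Rightarrow> 'a \<Rightarrow> bool) \<Rightarrow> 'a \<Rightarrow> 'a set" where
  "nbhd V E v = {u \<in> V. E v u}"

definition degree :: "'a set \<Rightarrow> ('a \<Rightarrow> 'a \<Rightarrow> bool) \<Rightarrow> 'a \<Rightarrow> nat" where
  "degree V E v = card (nbhd V E v)"

definition max_degree :: "'a set \<Rightarrow> ('a \<Rightarrow> 'a \<Rightarrow> bool) \<Rightarrow> nat" where
  "max_degree V E = Max (degree V E ` V)"

definition total_dominating_set :: "'a set \<Rightarrow> ('a \<Rightarrow> 'a \<Rightarrow> bool) \<Rightarrow> 'a set \<Rightarrow> bool" where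
  "total_dominating_set V E D \<longleftrightarrow> D \<subseteq> V \<and> (\<forall>v\<in>V. \<exists>u\<in>D. E v u)"

definition total_domination_number :: "'a set \<Rightarrow> ('a \<Rightarrow> 'a \<Rightarrow> bool) \<Rightarrow> nat" where
  "total_domination_number V E = (LEAST k. \<exists>D. total_dominating_set V E D \<and> card D = k)"

definition gamma_t_set :: "'a set \<Rightarrow> ('a \<Rightarrow> 'a \<Rightarrow> bool) \<Rightarrow> 'a set \<Rightarrow> bool" where
  "gamma_t_set V E D \<longleftrightarrow> total_dominating_set V E D \<and> card D = total_domination_number V E"

definition TDV :: "'a set \<Rightarrow> ('a \<Rightarrow> 'a \<Rightarrow> bool) \<Rightarrow> 'a \<Rightarrow> nat" where
  "TDV V E v = card {D. gamma_t_set V E D \<and> v \<in> D}"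

end

theory Submission
  imports Defs
begin

theorem proposition2p13:
  fixes V :: "'a set" and E :: "'a \<Rightarrow> 'a \<Rightarrow> bool"
  assumes "simple_graph V E"
    and "V \<noteq> {}"
    and "\<forall>v\<in>V. degree V E v \<ge> 1"
    and "max_degree V E = card V - 1"
  shows "total_domination_number V E = 2
         \<and> (\<forall>v\<in>V. TDV V E v \<le> card V - 1)
         \<and> (\<forall>v\<in>V. TDV V E v = card V - 1 \<longleftrightarrow> degree V E v = card V - 1)"
proof -
  have fin: "finite V" and sym: "\<And>x y. E x y \<Longrightarrow> E y x" and irr: "\<And>x. \<not> E x x"
    and inV: "\<And>x y. E x y \<Longrightarrow> x \<in> V \<and> y \<in> V"
    using assms(1) unfolding simple_graph_def by auto
  have nbsub: "\<And>v. v \<in> V \<Longrightarrow> nbhd V E v \<subseteq> V - {v}"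
    unfolding nbhd_def using irr by auto
  have degle: "\<And>v. v \<in> V \<Longrightarrow> degree V E v \<le> card V - 1"
  proof -
    fix v assume "v \<in> V"
    have "card (nbhd V E v) \<le> card (V - {v})" using nbsub[OF \<open>v\<in>V\<close>] fin by (intro card_mono) auto
    thus "degree V E v \<le> card V - 1" using \<open>v\<in>V\<close> fin by (simp add: degree_def)
  qed
  have "max_degree V E \<in> degree V E ` V" unfolding max_degree_def
    using fin assms(2) by (intro Max_in) auto
  then obtain w where w: "w \<in> V" "degree V E w = card V - 1" using assms(4) by auto
  have tds2: "\<And>D. total_dominating_set V E D \<Longrightarrow> 2 \<le> card D"
  proof -
    fix D assume D: "total_dominating_set V E D"
    obtain v where "v \<in> V" using assms(2) by auto
    then obtain u where u: "u \<in> D" "E v u" using D unfolding total_dominating_set_def by auto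
    then obtain u' where u': "u' \<in> D" "E u u'" using D inV unfolding total_dominating_set_def by blast
    have "u \<noteq> u'" using irr u' by auto
    moreover have "finite D" using D fin unfolding total_dominating_set_def by (auto intro: finite_subset)
    ultimately have "card {u,u'} \<le> card D" using u u' by (intro card_mono) auto
    thus "2 \<le> card D" using \<open>u \<noteq> u'\<close> by simp
  qed
  have vall0: "\<And>x v. v \<in> V \<Longrightarrow> degree V E v = card V - 1 \<Longrightarrow> x \<in> V \<Longrightarrow> x \<noteq> v \<Longrightarrow> E v x"
  proof (rule ccontr)
    fix x v assume v: "v \<in> V" "degree V E v = card V - 1" and u: "x \<in> V" "x \<noteq> v"
    assume nE: "\<not> E v x"
    have "nbhd V E v \<subseteq> V - {v} - {x}" using nbsub[OF v(1)] u nE unfolding nbhd_def by auto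
    hence "card (nbhd V E v) \<le> card (V - {v} - {x})" using fin by (intro card_mono) auto
    also have "\<dots> = card V - 2" using u v(1) fin by simp
    finally have "card V - 1 \<le> card V - 2" using v unfolding degree_def by simp
    moreover have "card {v,x} \<le> card V" using u v(1) fin by (intro card_mono) auto
    hence "card V \<ge> 2" using u by simp
    ultimately show False by linarith
  qed
  have pairtds: "\<And>v u. v \<in> V \<Longrightarrow> degree V E v = card V - 1 \<Longrightarrow> E v u \<Longrightarrow> total_dominating_set V E {v,u}"
  proof -
    fix v u assume v: "v \<in> V" "degree V E v = card V - 1" "E v u"
    have vall: "\<And>x. x \<in> V \<Longrightarrow> x \<noteq> v \<Longrightarrow> E v x" using vall0 v by blast
    show "total_dominating_set V E {v,u}" unfolding total_dominating_set_def
      using v inV vall sym by blast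
  qed
  have degw1: "card V - 1 \<ge> 1" using w assms(3) by auto
  hence "card (V - {w}) \<noteq> 0" using w(1) fin by simp
  hence "V - {w} \<noteq> {}" by (metis card.empty)
  then obtain u0 where u0: "u0 \<in> V" "u0 \<noteq> w" by auto
  have wall: "E w u0" using vall0[OF w u0] .
  have tdn: "total_domination_number V E = 2"
    unfolding total_domination_number_def
  proof (rule Least_equality)
    show "\<exists>D. total_dominating_set V E D \<and> card D = 2"
      using pairtds[OF w(1) w(2) wall] u0 by (intro exI[of _ "{w,u0}"]) auto
  next
    fix y assume "\<exists>D. total_dominating_set V E D \<and> card D = y"
    thus "2 \<le> y" using tds2 by auto
  qed
  have gsub: "\<And>v. {D. gamma_t_set V E D \<and> v \<in> D} \<subseteq> (\<lambda>u. {v,u}) ` nbhd V E v"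
  proof
    fix v D assume "D \<in> {D. gamma_t_set V E D \<and> v \<in> D}"
    hence D: "total_dominating_set V E D" "card D = 2" "v \<in> D"
      unfolding gamma_t_set_def tdn by auto
    then obtain a b where ab: "D = {a,b}" "a \<noteq> b" by (meson card_2_iff)
    obtain u where u: "u \<in> D" "E v u" using D inV unfolding total_dominating_set_def by blast
    have "u \<noteq> v" using irr u by auto
    hence "D = {v,u}" using ab D(3) u(1) by auto
    moreover have "u \<in> nbhd V E v" using u inV unfolding nbhd_def by auto
    ultimately show "D \<in> (\<lambda>u. {v,u}) ` nbhd V E v" by auto
  qed
  have finnb: "\<And>v. finite (nbhd V E v)" using fin unfolding nbhd_def by auto
  have tdvle: "\<And>v. TDV V E v \<le> degree V E v"
    unfolding TDV_def degree_def
    by (rule order_trans[OF card_mono[OF _ gsub] card_image_le]) (auto intro: finnb)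
  have inj: "\<And>v. inj_on (\<lambda>u. {v,u}) (nbhd V E v)"
    unfolding inj_on_def nbhd_def using irr by (auto simp: doubleton_eq_iff)
  have full: "\<And>v. v \<in> V \<Longrightarrow> degree V E v = card V - 1 \<Longrightarrow> TDV V E v = card V - 1"
  proof -
    fix v assume v: "v \<in> V" "degree V E v = card V - 1"
    have "(\<lambda>u. {v,u}) ` nbhd V E v \<subseteq> {D. gamma_t_set V E D \<and> v \<in> D}"
    proof
      fix D assume "D \<in> (\<lambda>u. {v,u}) ` nbhd V E v"
      then obtain u where u: "u \<in> nbhd V E v" "D = {v,u}" by auto
      have "E v u" using u unfolding nbhd_def by auto
      hence "u \<noteq> v" using irr by auto
      thus "D \<in> {D. gamma_t_set V E D \<and> v \<in> D}"
        using pairtds[OF v \<open>E v u\<close>] u unfolding gamma_t_set_def tdn by auto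
    qed
    hence "{D. gamma_t_set V E D \<and> v \<in> D} = (\<lambda>u. {v,u}) ` nbhd V E v" using gsub[of v] by (rule equalityI[rotated])
    thus "TDV V E v = card V - 1" unfolding TDV_def using card_image[OF inj] v
      by (simp add: degree_def)
  qed
  show ?thesis
    using tdn tdvle degle full by (metis le_antisym order_trans)
qed

end
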